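(* Let $\bar x\in S$ be an isolated point of $S$. Suppose that $\nabla f(\bar x)d\ge0$ for all $d\in T_\Phi(\bar x)$, and there exists $\lambda\in\mathbb{R}^m$ with $\nabla_xL(\bar x,\lambda)=0$ such that for every $d\in C(\bar x)\setminus\{0\}$: (i) $\langle\lambda,v\rangle<0$ for all $v\in\nabla g(\bar x)\big(T''_\Phi(\bar x;d)\cap(\{d\}^\perp\setminus\{0\})\big)$; (ii) $\nabla^2_{xx}L(\bar x,\lambda)(d,d)-\sigma_{\nabla g(\bar x)(T^2_\Phi(\bar x;d)\cap\{d\}^\perp)+\nabla^2g(\bar x)(d,d)}(\lambda)>0$. Then $\bar x$ is a local second-order weak sharp minimizer of problem (P).
   Context: Standing setting: $f:\mathbb{R}^n\to\mathbb{R}$, $g:\mathbb{R}^n\to\mathbb{R}^m$ twice continuously differentiable, $K\subset\mathbb{R}^m$ closed; (P) is $\min f(x)$ s.t. $g(x)\in K$; $\Phi:=\{x:g(x)\in K\}$; $S$ is the (nonempty) set of optimal solutions; $L(x,\lambda):=f(x)+\langle g(x),\lambda\rangle$. $\bar x\in\Phi$ is a local second-order weak sharp minimizer if there are $\kappa,\delta>0$ with $f(x)\ge f(\bar x)+\kappa[\mathrm{dist}(x,S)]^2$ for all $x\in\Phi\cap B_\delta(\bar x)$. For a closed set $A$ and $\bar x\in A$: $T_A(\bar x):=\{d:\exists t_k\downarrow0,d_k\to d,\bar x+t_kd_k\in A\}$; for $d\in T_A(\bar x)$, $T^2_A(\bar x;d):=\{w:\exists t_k\downarrow0,w_k\to w,\bar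 x+t_kd+\tfrac12t_k^2w_k\in A\}$ and $T''_A(\bar x;d):=\{w:\exists(t_k,r_k)\downarrow(0,0),t_k/r_k\to0,w_k\to w,\bar x+t_kd+\tfrac12t_kr_kw_k\in A\}$. $C(x):=\{d:\nabla g(x)d\in T_K(g(x)),\nabla f(x)d\le0\}$. $\{d\}^\perp$ is the orthogonal complement of $d$; $\sigma_A(\lambda):=\sup_{u\in A}\langle\lambda,u\rangle$ ($-\infty$ if $A=\emptyset$); $\nabla^2g(x)(d,d):=(d^T\nabla^2g_i(x)d)_{i=1}^m$; $\nabla g(x)(A):=\{\nabla g(x)u:u\in A\}$. *)

theory Defs
  imports "HOL-Analysis.Analysis"
begin

definition tangent_cone :: "'a::real_normed_vector set \<Rightarrow> 'a \<Rightarrow> 'a set" where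
  "tangent_cone A x = {d. \<exists>t dd. (\<forall>k. t k > 0) \<and> t \<longlonglongrightarrow> 0 \<and> dd \<longlonglongrightarrow> d
                           \<and> (\<forall>k. x + t k *\<^sub>R dd k \<in> A)}"

definition second_tangent_set :: "'a::real_normed_vector set \<Rightarrow> 'a \<Rightarrow> 'a \<Rightarrow> 'a set" where
  "second_tangent_set A x d = {w. \<exists>t ww. (\<forall>k. t k > 0) \<and> t \<longlonglongrightarrow> 0 \<and> ww \<longlonglongrightarrow> w
        \<and> (\<forall>k. x + t k *\<^sub>R d + ((1/2) * (t k)\<^sup>2) *\<^sub>R ww k \<in> A)}"

definition asymp_second_tangent_cone :: "'a::real_normed_vector set \<Rightarrow> 'a \<Rightarrow> 'a \<Rightarrow> 'a set" where
  "asymp_second_tangent_cone A x d = {w. \<exists>t r ww. (\<forall>k. t k > 0 \<and> r k > 0)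
        \<and> t \<longlonglongrightarrow> 0 \<and> r \<longlonglongrightarrow> 0 \<and> (\<lambda>k. t k / r k) \<longlonglongrightarrow> 0 \<and> ww \<longlonglongrightarrow> w
        \<and> (\<forall>k. x + t k *\<^sub>R d + ((1/2) * t k * r k) *\<^sub>R ww k \<in> A)}"

text \<open>Support function sigma_A(lambda), with value -\<infinity> on the empty set.\<close>
definition support_fun :: "'a::real_inner set \<Rightarrow> 'a \<Rightarrow> ereal" where
  "support_fun A l = (SUP u\<in>A. ereal (inner l u))"

definition feasible :: "('n \<Rightarrow> 'm) \<Rightarrow> 'm set \<Rightarrow> 'n set" where
  "feasible g K = {x. g x \<in> K}"

definition optimal_set :: "('n \<Rightarrow> real) \<Rightarrow> ('n \<Rightarrow> 'm) \<Rightarrow> 'm set \<Rightarrow> 'n set" where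
  "optimal_set f g K = {x \<in> feasible g K. \<forall>y \<in> feasible g K. f x \<le> f y}"

definition critical_cone ::
  "('n::real_normed_vector \<Rightarrow>\<^sub>L real) \<Rightarrow> ('n \<Rightarrow>\<^sub>L 'm::real_normed_vector) \<Rightarrow> 'm set \<Rightarrow> 'm \<Rightarrow> 'n set" where
  "critical_cone Dfx Dgx K gx = {d. blinfun_apply Dgx d \<in> tangent_cone K gx \<and> blinfun_apply Dfx d \<le> 0}"

definition local_so_weak_sharp_min ::
  "('n::real_normed_vector \<Rightarrow> real) \<Rightarrow> ('n \<Rightarrow> 'm) \<Rightarrow> 'm set \<Rightarrow> 'n \<Rightarrow> bool" where
  "local_so_weak_sharp_min f g K xb \<longleftrightarrow> xb \<in> feasible g K \<and>
     (\<exists>\<kappa>>0. \<exists>\<delta>>0. \<forall>x \<in> feasible g K \<inter> ball xb \<delta>.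
        f x \<ge> f xb + \<kappa> * (infdist x (optimal_set f g K))\<^sup>2)"

end

theory Submission
  imports Defs
begin
lemma taylor2:
  fixes f :: "'a::real_normed_vector \<Rightarrow> real" and Df :: "'a \<Rightarrow> ('a \<Rightarrow>\<^sub>L real)"
    and D2 :: "'a \<Rightarrow>\<^sub>L ('a \<Rightarrow>\<^sub>L real)"
  assumes fd: "\<And>x. (f has_derivative blinfun_apply (Df x)) (at x)"
    and d2: "(Df has_derivative blinfun_apply D2) (at xb)"
    and e: "e > 0"
  shows "\<exists>\<delta>>0. \<forall>h. norm h < \<delta> \<longrightarrow>
     \<bar>f (xb+h) - f xb - blinfun_apply (Df xb) h - (1/2) * blinfun_apply (blinfun_apply D2 h) h\<bar> \<le> e * (norm h)\<^sup>2"
proof -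
  from d2[unfolded has_derivative_at_alt] e obtain \<delta> where dpos: "\<delta> > 0" and
    dd: "\<And>y. norm (y - xb) < \<delta> \<Longrightarrow> norm (Df y - Df xb - blinfun_apply D2 (y - xb)) \<le> e * norm (y - xb)"
    by blast
  have "\<bar>f (xb+h) - f xb - blinfun_apply (Df xb) h - (1/2) * blinfun_apply (blinfun_apply D2 h) h\<bar> \<le> e * (norm h)\<^sup>2"
    if h: "norm h < \<delta>" for h
  proof -
    define A where "A = blinfun_apply (Df xb) h"
    define B where "B = blinfun_apply (blinfun_apply D2 h) h"
    define \<phi> where "\<phi> s = f (xb + s *\<^sub>R h) - s * A - s\<^sup>2 / 2 * B" for s
    define \<phi>' where "\<phi>' s = blinfun_apply (Df (xb + s *\<^sub>R h)) h - A - s * B" for s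
    have der: "DERIV \<phi> s :> \<phi>' s" for s
    proof -
      have g: "((\<lambda>s. xb + s *\<^sub>R h) has_derivative (\<lambda>u. u *\<^sub>R h)) (at s)"
        by (auto intro!: derivative_eq_intros)
      have c: "((\<lambda>s. f (xb + s *\<^sub>R h)) has_derivative (\<lambda>u. blinfun_apply (Df (xb + s *\<^sub>R h)) (u *\<^sub>R h))) (at s)"
        using has_derivative_compose[OF g fd] by simp
      have "((\<lambda>s. f (xb + s *\<^sub>R h) - s * A - s\<^sup>2 / 2 * B) has_derivative
          (\<lambda>u. blinfun_apply (Df (xb + s *\<^sub>R h)) (u *\<^sub>R h) - u * A - (u * (2 * s) / 2) * B)) (at s)"
        by (rule derivative_eq_intros c refl)+ (auto simp: algebra_simps)
      then show ?thesis unfolding \<phi>_def \<phi>'_def has_field_derivative_def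
        by (rule has_derivative_eq_rhs) (auto simp: fun_eq_iff blinfun.scaleR_right algebra_simps)
    qed
    obtain z where z: "0 < z" "z < 1" "\<phi> 1 - \<phi> 0 = (1 - 0) * \<phi>' z"
      using MVT2[of 0 1 \<phi> \<phi>'] der by auto
    have "\<phi>' z = blinfun_apply (Df (xb + z *\<^sub>R h) - Df xb - blinfun_apply D2 (z *\<^sub>R h)) h"
      unfolding \<phi>'_def A_def B_def by (simp add: blinfun.diff_left blinfun.scaleR_left blinfun.scaleR_right)
    then have "\<bar>\<phi>' z\<bar> \<le> norm (Df (xb + z *\<^sub>R h) - Df xb - blinfun_apply D2 (z *\<^sub>R h)) * norm h"
      using norm_blinfun by (metis real_norm_def)
    also have "\<dots> \<le> (e * norm (z *\<^sub>R h)) * norm h"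
    proof (rule mult_right_mono[OF _ norm_ge_zero])
      have "z * norm h \<le> norm h" using z by (simp add: mult_left_le_one_le)
      then show "norm (Df (xb + z *\<^sub>R h) - Df xb - blinfun_apply D2 (z *\<^sub>R h)) \<le> e * norm (z *\<^sub>R h)"
        using dd[of "xb + z *\<^sub>R h"] h z by simp
    qed
    also have "\<dots> \<le> e * (norm h)\<^sup>2"
    proof -
      have "z * (norm h * norm h) \<le> norm h * norm h" using z by (simp add: mult_left_le_one_le)
      then show ?thesis using e z by (simp add: power2_eq_square)
    qed
    finally have "\<bar>\<phi>' z\<bar> \<le> e * (norm h)\<^sup>2" .
    moreover have "\<phi> 1 - \<phi> 0 = f (xb+h) - f xb - A - (1/2) * B" unfolding \<phi>_def by simp
    ultimately show ?thesis using z(3) unfolding A_def B_def by simp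
  qed
  then show ?thesis using dpos by blast
qed


lemma Rlim:
  fixes f :: "'a::real_normed_vector \<Rightarrow> real" and A :: "'a \<Rightarrow>\<^sub>L real"
    and B :: "'a \<Rightarrow>\<^sub>L ('a \<Rightarrow>\<^sub>L real)"
  assumes tay: "\<forall>e>0. \<exists>\<delta>>0. \<forall>h. norm h < \<delta> \<longrightarrow>
     \<bar>f (xb+h) - f xb - blinfun_apply A h - (1/2) * blinfun_apply (blinfun_apply B h) h\<bar> \<le> e * (norm h)\<^sup>2"
    and tpos: "\<And>k. t k > 0" and t0: "t \<longlonglongrightarrow> 0" and nd: "\<And>k. norm (dk k) = 1"
  shows "(\<lambda>k. (f (xb + t k *\<^sub>R dk k) - f xb - blinfun_apply A (t k *\<^sub>R dk k)
            - (1/2) * blinfun_apply (blinfun_apply B (t k *\<^sub>R dk k)) (t k *\<^sub>R dk k)) / (t k)\<^sup>2) \<longlonglongrightarrow> 0"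
proof (rule tendstoI)
  fix \<epsilon> :: real assume ep: "\<epsilon> > 0"
  then obtain \<delta> where dp: "\<delta> > 0" and hd: "\<And>h. norm h < \<delta> \<Longrightarrow>
     \<bar>f (xb+h) - f xb - blinfun_apply A h - (1/2) * blinfun_apply (blinfun_apply B h) h\<bar> \<le> \<epsilon>/2 * (norm h)\<^sup>2"
    using tay by (metis half_gt_zero)
  from tendstoD[OF t0 dp] have ev: "\<forall>\<^sub>F k in sequentially. dist (t k) 0 < \<delta>" .
  show "\<forall>\<^sub>F k in sequentially. dist ((f (xb + t k *\<^sub>R dk k) - f xb - blinfun_apply A (t k *\<^sub>R dk k)
            - (1/2) * blinfun_apply (blinfun_apply B (t k *\<^sub>R dk k)) (t k *\<^sub>R dk k)) / (t k)\<^sup>2) 0 < \<epsilon>"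
    using ev
  proof eventually_elim
    case (elim k)
    have nh: "norm (t k *\<^sub>R dk k) = t k" using nd[of k] tpos[of k] by simp
    have "norm (t k *\<^sub>R dk k) < \<delta>" using elim nh tpos[of k] by simp
    note hd[OF this]
    then have "\<bar>f (xb + t k *\<^sub>R dk k) - f xb - blinfun_apply A (t k *\<^sub>R dk k)
            - (1/2) * blinfun_apply (blinfun_apply B (t k *\<^sub>R dk k)) (t k *\<^sub>R dk k)\<bar> / (t k)\<^sup>2 \<le> \<epsilon>/2" (is "?X \<le> _")
      using tpos[of k] nh by (simp add: divide_le_eq)
    then have "?X < \<epsilon>" using ep by linarith
    then show ?case using tpos[of k] by (simp add: abs_divide)
  qed
qed

lemma core3:
  fixes f :: "'a::euclidean_space \<Rightarrow> real" and A :: "'a \<Rightarrow>\<^sub>L real"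
    and B :: "'a \<Rightarrow>\<^sub>L ('a \<Rightarrow>\<^sub>L real)" and P :: "'a set"
  assumes tay: "\<forall>e>0. \<exists>\<delta>>0. \<forall>h. norm h < \<delta> \<longrightarrow>
     \<bar>f (xb+h) - f xb - blinfun_apply A h - (1/2) * blinfun_apply (blinfun_apply B h) h\<bar> \<le> e * (norm h)\<^sup>2"
    and tpos: "\<And>k. t k > 0" and t0: "t \<longlonglongrightarrow> 0" and nd: "\<And>k. norm (dk k) = 1"
    and dkd: "dk \<longlonglongrightarrow> d"
    and feas: "\<And>k. xb + t k *\<^sub>R dk k \<in> P"
    and fb: "\<And>k. f (xb + t k *\<^sub>R dk k) - f xb \<le> e k * (t k)\<^sup>2"
    and e0: "e \<longlonglongrightarrow> 0"
    and Ad: "blinfun_apply A d = 0"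
    and H1: "\<And>u. u \<in> asymp_second_tangent_cone P xb d \<Longrightarrow> inner d u = 0 \<Longrightarrow> u \<noteq> 0 \<Longrightarrow> blinfun_apply A u > 0"
    and H2: "\<And>w. w \<in> second_tangent_set P xb d \<Longrightarrow> inner d w = 0 \<Longrightarrow>
               blinfun_apply (blinfun_apply B d) d + blinfun_apply A w > 0"
    and wdef: "\<And>k. w k = (2 / t k) *\<^sub>R (dk k - d)"
    and alim: "(\<lambda>k. 1 / (1 + norm (w k))) \<longlonglongrightarrow> \<alpha>"
    and ulim: "(\<lambda>k. (1 / (1 + norm (w k))) *\<^sub>R w k) \<longlonglongrightarrow> \<mu>"
  shows False
proof -
  define a where "a k = 1 / (1 + norm (w k))" for k
  define u where "u k = a k *\<^sub>R w k" for k
  define Rk where "Rk k = (f (xb + t k *\<^sub>R dk k) - f xb - blinfun_apply A (t k *\<^sub>R dk k)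
            - (1/2) * blinfun_apply (blinfun_apply B (t k *\<^sub>R dk k)) (t k *\<^sub>R dk k)) / (t k)\<^sup>2" for k
  have Rk0: "Rk \<longlonglongrightarrow> 0" unfolding Rk_def by (rule Rlim[OF tay tpos t0 nd])
  have alim': "a \<longlonglongrightarrow> \<alpha>" using alim unfolding a_def .
  have ulim': "u \<longlonglongrightarrow> \<mu>" using ulim unfolding u_def a_def .
  have apos: "a k > 0" for k unfolding a_def by (simp add: add_pos_nonneg)
  have nd1: "norm d = 1"
  proof -
    have "(\<lambda>k. norm (dk k)) \<longlonglongrightarrow> norm d" by (intro tendsto_intros dkd)
    then have "(\<lambda>k. 1) \<longlonglongrightarrow> norm d" using nd by simp
    then show ?thesis by (simp add: LIMSEQ_const_iff)
  qed
  have I1: "dk k = d + (t k / 2) *\<^sub>R w k" for k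
    using tpos[of k] by (simp add: wdef)
  have I3: "norm (dk k - d) = (t k / 2) * norm (w k)" for k
    using tpos[of k] by (simp add: I1)
  have dkd0: "(\<lambda>k. norm (dk k - d)) \<longlonglongrightarrow> 0"
    using dkd by (simp add: LIMSEQ_iff_nz dist_norm tendsto_iff) 
  have I2: "inner d (w k) = - (1 / t k) * (norm (dk k - d))\<^sup>2" for k
  proof -
    have "(norm (dk k - d))\<^sup>2 = 2 - 2 * inner d (dk k)"
      using nd[of k] nd1 by (simp add: norm_eq_1 power2_norm_eq_inner inner_diff_left inner_diff_right inner_commute)
    then show ?thesis using tpos[of k] apply (simp add: wdef inner_diff_right power2_norm_eq_inner[symmetric] nd1 field_simps)
      by (metis distrib_left)
  qed
  have feasw: "xb + t k *\<^sub>R d + ((1/2) * (t k)\<^sup>2) *\<^sub>R w k \<in> P" for k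
  proof -
    have "xb + t k *\<^sub>R d + ((1/2) * (t k)\<^sup>2) *\<^sub>R w k = xb + t k *\<^sub>R dk k"
      using tpos[of k] by (simp add: I1 scaleR_add_right power2_eq_square)
    then show ?thesis using feas[of k] by (metis add.assoc)
  qed
  have E: "f (xb + t k *\<^sub>R dk k) - f xb = (t k)\<^sup>2 * ((1/2) * blinfun_apply A (w k)
            + (1/2) * blinfun_apply (blinfun_apply B (dk k)) (dk k) + Rk k)" for k
  proof -
    have "blinfun_apply A (t k *\<^sub>R dk k) = (t k)\<^sup>2 * ((1/2) * blinfun_apply A (w k))"
      unfolding I1[of k] by (simp add: blinfun.scaleR_right blinfun.add_right Ad power2_eq_square)
    moreover have "blinfun_apply (blinfun_apply B (t k *\<^sub>R dk k)) (t k *\<^sub>R dk k) =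
        (t k)\<^sup>2 * blinfun_apply (blinfun_apply B (dk k)) (dk k)"
      by (simp add: blinfun.scaleR_right blinfun.scaleR_left power2_eq_square)
    ultimately show ?thesis using tpos[of k] unfolding Rk_def by (simp add: field_simps)
  qed
  have age: "\<alpha> \<ge> 0" using alim' apos by (meson LIMSEQ_le_const less_imp_le)
  show False
  proof (cases "\<alpha> > 0")
    case True
    define W where "W = (1 / \<alpha>) *\<^sub>R \<mu>"
    have wk: "w k = (1 / a k) *\<^sub>R u k" for k using apos[of k] by (simp add: u_def)
    have wlim: "w \<longlonglongrightarrow> W" unfolding W_def wk
      by (intro tendsto_intros alim' ulim') (use True in auto)
    have W2: "W \<in> second_tangent_set P xb d"
      unfolding second_tangent_set_def
      apply (rule CollectI, rule exI[of _ t], rule exI[of _ w]) using tpos t0 wlim feasw by auto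
    have "(\<lambda>k. inner d (w k)) \<longlonglongrightarrow> inner d W" by (intro tendsto_intros wlim)
    moreover have "(\<lambda>k. inner d (w k)) \<longlonglongrightarrow> 0"
    proof -
      have "inner d (w k) = - (t k / 4) * (norm (w k))\<^sup>2" for k
        using tpos[of k] by (simp add: I2 I3 power2_eq_square field_simps)
      moreover have "(\<lambda>k. - (t k / 4) * (norm (w k))\<^sup>2) \<longlonglongrightarrow> - (0 / 4) * (norm W)\<^sup>2"
        by (intro tendsto_intros t0 wlim) auto
      ultimately show ?thesis by simp
    qed
    ultimately have dW: "inner d W = 0" by (rule LIMSEQ_unique)
    have pos: "blinfun_apply (blinfun_apply B d) d + blinfun_apply A W > 0" using H2[OF W2 dW] .
    define Q where "Q k = (1/2) * blinfun_apply A (w k)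
            + (1/2) * blinfun_apply (blinfun_apply B (dk k)) (dk k) + Rk k" for k
    have Qlim: "Q \<longlonglongrightarrow> (1/2) * blinfun_apply A W + (1/2) * blinfun_apply (blinfun_apply B d) d + 0"
      unfolding Q_def by (intro tendsto_intros wlim dkd Rk0)
    have Qle: "Q k \<le> e k" for k
    proof -
      have "(t k)\<^sup>2 * Q k \<le> (t k)\<^sup>2 * e k" using fb[of k] E[of k] unfolding Q_def by (simp add: mult.commute)
      then show ?thesis using tpos[of k] by simp
    qed
    have "(1/2) * blinfun_apply A W + (1/2) * blinfun_apply (blinfun_apply B d) d + 0 \<le> 0"
      using Qlim e0 Qle by (intro LIMSEQ_le[OF Qlim e0]) auto
    then show False using pos by simp
  next
    case False
    then have a0: "\<alpha> = 0" using age by simp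
    have nu: "norm (u k) = 1 - a k" for k
    proof -
      have p: "1 + norm (w k) > 0" by (smt (verit) norm_ge_zero)
      have "norm ((1 / (1 + norm (w k))) *\<^sub>R w k) = norm (w k) / (1 + norm (w k))" using p by simp
      also have "\<dots> = 1 - 1 / (1 + norm (w k))" using p by (simp add: field_simps)
      finally show ?thesis unfolding u_def a_def .
    qed
    have "(\<lambda>k. norm (u k)) \<longlonglongrightarrow> norm \<mu>" by (intro tendsto_intros ulim')
    moreover have "(\<lambda>k. norm (u k)) \<longlonglongrightarrow> 1 - 0" unfolding nu using alim' a0 by (intro tendsto_intros) auto
    ultimately have nmu: "norm \<mu> = 1" by (simp add: LIMSEQ_unique)
    define r where "r k = t k / a k" for k
    have rpos: "r k > 0" for k using tpos[of k] apos[of k] by (simp add: r_def)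
    have rk: "r k = t k + 2 * norm (dk k - d)" for k
      using tpos[of k] unfolding r_def a_def I3 by (simp add: field_simps)
    have r0: "r \<longlonglongrightarrow> 0" unfolding rk using tendsto_add[OF t0 tendsto_mult[OF tendsto_const[of 2] dkd0]] by simp
    have tr: "(\<lambda>k. t k / r k) \<longlonglongrightarrow> 0"
    proof -
      have "t k / r k = a k" for k using tpos[of k] apos[of k] by (simp add: r_def)
      then show ?thesis using alim' a0 by simp
    qed
    have feasu: "xb + t k *\<^sub>R d + ((1/2) * t k * r k) *\<^sub>R u k \<in> P" for k
    proof -
      have "((1/2) * t k * r k) *\<^sub>R u k = ((1/2) * (t k)\<^sup>2) *\<^sub>R w k"
        using apos[of k] unfolding r_def u_def by (simp add: power2_eq_square)
      then show ?thesis using feasw[of k] by simp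
    qed
    have mu2: "\<mu> \<in> asymp_second_tangent_cone P xb d"
      unfolding asymp_second_tangent_cone_def
      apply (rule CollectI, rule exI[of _ t], rule exI[of _ r], rule exI[of _ u]) using tpos rpos t0 r0 tr ulim' feasu by auto
    have "(\<lambda>k. inner d (u k)) \<longlonglongrightarrow> inner d \<mu>" by (intro tendsto_intros ulim')
    moreover have "(\<lambda>k. inner d (u k)) \<longlonglongrightarrow> 0"
    proof -
      have "inner d (u k) = - (1 - a k) * (norm (dk k - d) / 2)" for k
        using tpos[of k] apos[of k] unfolding u_def
        by (simp add: I2 I3 power2_eq_square a_def field_simps)
      moreover have "(\<lambda>k. - (1 - a k) * (norm (dk k - d) / 2)) \<longlonglongrightarrow> - (1 - \<alpha>) * (0 / 2)"
        by (intro tendsto_intros alim' dkd0) auto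
      moreover have "- (1 - \<alpha>) * (0 / 2) = (0::real)" by simp
      ultimately show ?thesis by (simp only:)
    qed
    ultimately have dmu: "inner d \<mu> = 0" by (rule LIMSEQ_unique)
    have pos: "blinfun_apply A \<mu> > 0" proof -
      have "\<mu> \<noteq> 0" using nmu by auto
      then show ?thesis using H1[OF mu2 dmu] by blast
    qed
    define Q where "Q k = (1/2) * blinfun_apply A (u k)
            + a k * ((1/2) * blinfun_apply (blinfun_apply B (dk k)) (dk k) + Rk k)" for k
    have Qlim: "Q \<longlonglongrightarrow> (1/2) * blinfun_apply A \<mu> + \<alpha> * ((1/2) * blinfun_apply (blinfun_apply B d) d + 0)"
      unfolding Q_def by (intro tendsto_intros ulim' alim' dkd Rk0)
    have Qle: "Q k \<le> e k * a k" for k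
    proof -
      have tt: "(t k)\<^sup>2 = (t k * r k) * a k" using apos[of k] by (simp add: r_def power2_eq_square)
      have "(t k)\<^sup>2 * ((1/2) * blinfun_apply A (w k)
            + (1/2) * blinfun_apply (blinfun_apply B (dk k)) (dk k) + Rk k) = (t k * r k) * Q k"
        using apos[of k] unfolding Q_def tt u_def
        by (simp add: blinfun.scaleR_right field_simps)
      then have "(t k * r k) * Q k \<le> (t k * r k) * (e k * a k)" using fb[of k] E[of k] tt by (simp add: algebra_simps)
      then show ?thesis using tpos[of k] rpos[of k] by simp
    qed
    have "(\<lambda>k. e k * a k) \<longlonglongrightarrow> 0 * \<alpha>" by (intro tendsto_intros e0 alim')
    then have "(1/2) * blinfun_apply A \<mu> + \<alpha> * ((1/2) * blinfun_apply (blinfun_apply B d) d + 0) \<le> 0 * \<alpha>"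
      using Qle by (intro LIMSEQ_le[OF Qlim]) auto
    then show False using pos a0 by simp
  qed
qed

lemma core2:
  fixes f :: "'a::euclidean_space \<Rightarrow> real" and A :: "'a \<Rightarrow>\<^sub>L real"
    and B :: "'a \<Rightarrow>\<^sub>L ('a \<Rightarrow>\<^sub>L real)" and P :: "'a set"
  assumes tay: "\<forall>e>0. \<exists>\<delta>>0. \<forall>h. norm h < \<delta> \<longrightarrow>
     \<bar>f (xb+h) - f xb - blinfun_apply A h - (1/2) * blinfun_apply (blinfun_apply B h) h\<bar> \<le> e * (norm h)\<^sup>2"
    and tpos: "\<And>k. t k > 0" and t0: "t \<longlonglongrightarrow> 0" and nd: "\<And>k. norm (dk k) = 1"
    and dkd: "dk \<longlonglongrightarrow> d"
    and feas: "\<And>k. xb + t k *\<^sub>R dk k \<in> P"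
    and fb: "\<And>k. f (xb + t k *\<^sub>R dk k) - f xb \<le> e k * (t k)\<^sup>2"
    and e0: "e \<longlonglongrightarrow> 0"
    and Ad: "blinfun_apply A d = 0"
    and H1: "\<And>u. u \<in> asymp_second_tangent_cone P xb d \<Longrightarrow> inner d u = 0 \<Longrightarrow> u \<noteq> 0 \<Longrightarrow> blinfun_apply A u > 0"
    and H2: "\<And>w. w \<in> second_tangent_set P xb d \<Longrightarrow> inner d w = 0 \<Longrightarrow>
               blinfun_apply (blinfun_apply B d) d + blinfun_apply A w > 0"
  shows False
proof -
  define w where "w k = (2 / t k) *\<^sub>R (dk k - d)" for k
  define z where "z k = (1 / (1 + norm (w k)), (1 / (1 + norm (w k))) *\<^sub>R w k)" for k
  have zb: "norm (z k) \<le> 2" for k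
  proof -
    have p: "1 + norm (w k) > 0" by (smt (verit) norm_ge_zero)
    have "norm (z k) \<le> norm (1 / (1 + norm (w k))) + norm ((1 / (1 + norm (w k))) *\<^sub>R w k)"
      unfolding z_def by (rule norm_Pair_le)
    also have "\<dots> = 1 / (1 + norm (w k)) + norm (w k) / (1 + norm (w k))" using p by simp
    also have "\<dots> = 1" using p by (simp add: field_simps)
    finally show ?thesis by simp
  qed
  have "bounded (range z)" unfolding bounded_iff using zb by blast
  then obtain l r where r: "strict_mono r" and zl: "(z \<circ> r) \<longlonglongrightarrow> l"
    using bounded_imp_convergent_subsequence by blast
  have al: "(\<lambda>k. 1 / (1 + norm (w (r k)))) \<longlonglongrightarrow> fst l"
    using tendsto_fst[OF zl] by (simp add: z_def comp_def)
  have ul: "(\<lambda>k. (1 / (1 + norm (w (r k)))) *\<^sub>R w (r k)) \<longlonglongrightarrow> snd l"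
    using tendsto_snd[OF zl] by (simp add: z_def comp_def)
  have t0': "(\<lambda>k. t (r k)) \<longlonglongrightarrow> 0" using LIMSEQ_subseq_LIMSEQ[OF t0 r] by (simp add: comp_def)
  have dkd': "(\<lambda>k. dk (r k)) \<longlonglongrightarrow> d" using LIMSEQ_subseq_LIMSEQ[OF dkd r] by (simp add: comp_def)
  have e0': "(\<lambda>k. e (r k)) \<longlonglongrightarrow> 0" using LIMSEQ_subseq_LIMSEQ[OF e0 r] by (simp add: comp_def)
  have wr: "\<And>k. w (r k) = (2 / t (r k)) *\<^sub>R (dk (r k) - d)" using w_def by blast
  show False
    by (rule core3[where t="\<lambda>k. t (r k)" and dk="\<lambda>k. dk (r k)" and e="\<lambda>k. e (r k)"
          and w="\<lambda>k. w (r k)", OF tay tpos t0' nd dkd' feas fb e0' Ad H1 H2 wr al ul])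
qed

lemma tangent_image:
  fixes g :: "'a::real_normed_vector \<Rightarrow> 'b::real_normed_vector"
  assumes gd: "(g has_derivative G) (at xb)"
    and dT: "d \<in> tangent_cone {x. g x \<in> K} xb"
  shows "G d \<in> tangent_cone K (g xb)"
proof -
  from dT obtain t dd where tpos: "\<And>k. t k > 0" and t0: "t \<longlonglongrightarrow> 0" and ddl: "dd \<longlonglongrightarrow> d"
    and fe: "\<And>k. g (xb + t k *\<^sub>R dd k) \<in> K"
    unfolding tangent_cone_def by auto
  have bl: "bounded_linear G" using gd has_derivative_bounded_linear by blast
  define DD where "DD k = (1 / t k) *\<^sub>R (g (xb + t k *\<^sub>R dd k) - g xb)" for k
  have feK: "g xb + t k *\<^sub>R DD k \<in> K" for k using fe[of k] tpos[of k] by (simp add: DD_def)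
  have "(\<lambda>k. DD k - G (dd k)) \<longlonglongrightarrow> 0"
  proof (rule tendstoI)
    fix \<epsilon> :: real assume ep: "\<epsilon> > 0"
    have "bounded (range dd)" using ddl by (simp add: convergent_imp_bounded)
    then obtain M where M: "M > 0" "\<And>k. norm (dd k) \<le> M" unfolding bounded_pos by blast
    from gd[unfolded has_derivative_at_alt] ep M obtain \<delta> where dp: "\<delta> > 0"
      and hd: "\<And>y. norm (y - xb) < \<delta> \<Longrightarrow> norm (g y - g xb - G (y - xb)) \<le> \<epsilon> / (2 * M) * norm (y - xb)"
      by (metis divide_pos_pos half_gt_zero mult_pos_pos zero_less_numeral)
    have "(\<lambda>k. t k * M) \<longlonglongrightarrow> 0 * M" by (intro tendsto_intros t0)
    from tendstoD[OF this dp] have ev: "\<forall>\<^sub>F k in sequentially. dist (t k * M) 0 < \<delta>" by simp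
    show "\<forall>\<^sub>F k in sequentially. dist (DD k - G (dd k)) 0 < \<epsilon>"
      using ev
    proof eventually_elim
      case (elim k)
      have nn: "norm (t k *\<^sub>R dd k) \<le> t k * M" using M(2)[of k] tpos[of k] by (simp add: mult_left_mono)
      have "t k * M < \<delta>" using elim tpos[of k] M by simp
      then have "norm (t k *\<^sub>R dd k) < \<delta>" using nn by linarith
      then have "norm ((xb + t k *\<^sub>R dd k) - xb) < \<delta>" by simp
      note hd[OF this]
      then have "norm (g (xb + t k *\<^sub>R dd k) - g xb - G (t k *\<^sub>R dd k)) \<le> \<epsilon> / (2 * M) * (t k * M)"
        using nn ep M(1) by (smt (verit) add_diff_cancel_left' divide_pos_pos mult_left_mono mult_pos_pos zero_less_numeral)
      also have "\<dots> = t k * (\<epsilon> / 2)" using M(1) by (simp add: field_simps)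
      finally have a: "norm (g (xb + t k *\<^sub>R dd k) - g xb - G (t k *\<^sub>R dd k)) \<le> t k * (\<epsilon> / 2)" .
      have "DD k - G (dd k) = (1 / t k) *\<^sub>R (g (xb + t k *\<^sub>R dd k) - g xb - G (t k *\<^sub>R dd k))"
        using tpos[of k] by (simp add: DD_def linear_simps[OF bl] scaleR_diff_right)
      then have "norm (DD k - G (dd k)) = norm (g (xb + t k *\<^sub>R dd k) - g xb - G (t k *\<^sub>R dd k)) / t k"
        using tpos[of k] by simp
      also have "\<dots> \<le> \<epsilon> / 2" using a tpos[of k] by (simp add: divide_le_eq mult.commute)
      finally show ?case using ep by simp
    qed
  qed
  moreover have "(\<lambda>k. G (dd k)) \<longlonglongrightarrow> G d" using bounded_linear.tendsto[OF bl ddl] .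
  ultimately have "(\<lambda>k. (DD k - G (dd k)) + G (dd k)) \<longlonglongrightarrow> 0 + G d" by (rule tendsto_add)
  then have "DD \<longlonglongrightarrow> G d" by simp
  then show ?thesis unfolding tangent_cone_def using tpos t0 feK by blast
qed

theorem theorem4p6:
  fixes f :: "real^'n \<Rightarrow> real" and g :: "real^'n \<Rightarrow> real^'m" and K :: "(real^'m) set"
    and Df :: "real^'n \<Rightarrow> ((real^'n) \<Rightarrow>\<^sub>L real)"
    and D2f :: "real^'n \<Rightarrow> ((real^'n) \<Rightarrow>\<^sub>L ((real^'n) \<Rightarrow>\<^sub>L real))"
    and Dg :: "real^'n \<Rightarrow> ((real^'n) \<Rightarrow>\<^sub>L (real^'m))"
    and D2g :: "real^'n \<Rightarrow> ((real^'n) \<Rightarrow>\<^sub>L ((real^'n) \<Rightarrow>\<^sub>L (real^'m)))"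
    and xb :: "real^'n"
  assumes f_d1: "\<And>x. (f has_derivative blinfun_apply (Df x)) (at x)"
    and f_d2: "\<And>x. (Df has_derivative blinfun_apply (D2f x)) (at x)"
    and f_c2: "continuous_on UNIV D2f"
    and g_d1: "\<And>x. (g has_derivative blinfun_apply (Dg x)) (at x)"
    and g_d2: "\<And>x. (Dg has_derivative blinfun_apply (D2g x)) (at x)"
    and g_c2: "continuous_on UNIV D2g"
    and K_closed: "closed K"
    and xb_S: "xb \<in> optimal_set f g K"
    and isolated: "\<exists>r>0. optimal_set f g K \<inter> ball xb r = {xb}"
    and first_order: "\<forall>d \<in> tangent_cone (feasible g K) xb. blinfun_apply (Df xb) d \<ge> 0"
    and multiplier: "\<exists>l :: real^'m.
        (\<forall>u. blinfun_apply (Df xb) u + inner l (blinfun_apply (Dg xb) u) = 0) \<and>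
        (\<forall>d \<in> critical_cone (Df xb) (Dg xb) K (g xb) - {0}.
           (\<forall>v \<in> blinfun_apply (Dg xb) `
                   (asymp_second_tangent_cone (feasible g K) xb d \<inter> ({w. inner d w = 0} - {0})).
               inner l v < 0) \<and>
           ereal (blinfun_apply (blinfun_apply (D2f xb) d) d
                  + inner l (blinfun_apply (blinfun_apply (D2g xb) d) d))
             - support_fun {blinfun_apply (Dg xb) w + blinfun_apply (blinfun_apply (D2g xb) d) d | w.
                              w \<in> second_tangent_set (feasible g K) xb d \<and> inner d w = 0} l > 0)"
  shows "local_so_weak_sharp_min f g K xb"
proof -
  let ?P = "feasible g K"
  let ?A = "Df xb"
  let ?B = "D2f xb"
  obtain l :: "real^'m" where l: "(\<forall>u. blinfun_apply (Df xb) u + inner l (blinfun_apply (Dg xb) u) = 0) \<and>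
        (\<forall>d \<in> critical_cone (Df xb) (Dg xb) K (g xb) - {0}.
           (\<forall>v \<in> blinfun_apply (Dg xb) `
                   (asymp_second_tangent_cone (feasible g K) xb d \<inter> ({w. inner d w = 0} - {0})).
               inner l v < 0) \<and>
           ereal (blinfun_apply (blinfun_apply (D2f xb) d) d
                  + inner l (blinfun_apply (blinfun_apply (D2g xb) d) d))
             - support_fun {blinfun_apply (Dg xb) w + blinfun_apply (blinfun_apply (D2g xb) d) d | w.
                              w \<in> second_tangent_set (feasible g K) xb d \<and> inner d w = 0} l > 0)"
    using multiplier by (rule exE)
  have lA: "\<And>u. blinfun_apply (Df xb) u + inner l (blinfun_apply (Dg xb) u) = 0"
    using conjunct1[OF l] by (rule spec)
  note lC = bspec[OF conjunct2[OF l]]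
  have tay: "\<forall>e>0. \<exists>\<delta>>0. \<forall>h. norm h < \<delta> \<longrightarrow>
     \<bar>f (xb+h) - f xb - blinfun_apply ?A h - (1/2) * blinfun_apply (blinfun_apply ?B h) h\<bar> \<le> e * (norm h)\<^sup>2"
    using taylor2[OF f_d1 f_d2] by blast
  have G: "\<exists>\<kappa>>0. \<exists>\<delta>>0. \<forall>x. x \<in> ?P \<and> norm (x - xb) < \<delta> \<longrightarrow> f xb + \<kappa> * (norm (x - xb))\<^sup>2 \<le> f x"
  proof (rule ccontr)
    assume nG: "\<not> ?thesis"
    have "\<forall>k::nat. \<exists>x. x \<in> ?P \<and> norm (x - xb) < 1 / (Suc k) \<and> f x < f xb + 1 / (Suc k) * (norm (x - xb))\<^sup>2"
    proof
      fix k :: nat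
      have pos: "1 / real (Suc k) > 0" by simp
      show "\<exists>x. x \<in> ?P \<and> norm (x - xb) < 1 / (Suc k) \<and> f x < f xb + 1 / (Suc k) * (norm (x - xb))\<^sup>2"
      proof (rule ccontr)
        assume "\<not> (\<exists>x. x \<in> ?P \<and> norm (x - xb) < 1 / (Suc k) \<and> f x < f xb + 1 / (Suc k) * (norm (x - xb))\<^sup>2)"
        then have "\<forall>x. x \<in> ?P \<and> norm (x - xb) < 1 / (Suc k) \<longrightarrow> f xb + 1 / (Suc k) * (norm (x - xb))\<^sup>2 \<le> f x"
          by (auto simp: not_less)
        then have "\<exists>\<kappa>>0. \<exists>\<delta>>0. \<forall>x. x \<in> ?P \<and> norm (x - xb) < \<delta> \<longrightarrow> f xb + \<kappa> * (norm (x - xb))\<^sup>2 \<le> f x"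
          using pos by blast
        then show False using nG by (rule notE[rotated])
      qed
    qed
    then obtain X where XP: "\<And>k. X k \<in> ?P" and Xn: "\<And>k. norm (X k - xb) < 1 / (Suc k)"
      and Xf: "\<And>k. f (X k) < f xb + 1 / (Suc k) * (norm (X k - xb))\<^sup>2"
      by metis
    have Xne: "X k \<noteq> xb" for k using Xf[of k] by auto
    define t where "t k = norm (X k - xb)" for k
    define dk where "dk k = (1 / t k) *\<^sub>R (X k - xb)" for k
    have tpos: "t k > 0" for k using Xne[of k] by (simp add: t_def)
    have ndk: "norm (dk k) = 1" for k using tpos[of k] by (simp add: dk_def t_def)
    have Xeq: "X k = xb + t k *\<^sub>R dk k" for k using tpos[of k] by (simp add: dk_def)
    have t0: "t \<longlonglongrightarrow> 0"
    proof (rule Lim_null_comparison[where g="\<lambda>k. 1 / real (Suc k)"])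
      show "\<forall>\<^sub>F k in sequentially. norm (t k) \<le> 1 / real (Suc k)"
        using Xn by (simp add: t_def less_imp_le)
      show "(\<lambda>k. 1 / real (Suc k)) \<longlonglongrightarrow> 0" using LIMSEQ_inverse_real_of_nat by (simp add: inverse_eq_divide)
    qed
    have "bounded (range dk)" unfolding bounded_iff using ndk by (metis order_refl rangeE)
    then obtain d r where r: "strict_mono r" and dl: "(dk \<circ> r) \<longlonglongrightarrow> d"
      using bounded_imp_convergent_subsequence by blast
    define T where "T k = t (r k)" for k
    define D where "D k = dk (r k)" for k
    define E where "E k = 1 / real (Suc (r k))" for k
    have Tpos: "T k > 0" for k by (simp add: T_def tpos)
    have T0: "T \<longlonglongrightarrow> 0" using LIMSEQ_subseq_LIMSEQ[OF t0 r] by (simp add: comp_def T_def[abs_def])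
    have Dd: "D \<longlonglongrightarrow> d" using dl by (simp add: comp_def D_def[abs_def])
    have nD: "norm (D k) = 1" for k by (simp add: D_def ndk)
    have E0: "E \<longlonglongrightarrow> 0"
      using LIMSEQ_subseq_LIMSEQ[OF LIMSEQ_inverse_real_of_nat r]
      by (simp add: comp_def E_def[abs_def] inverse_eq_divide)
    have feas: "xb + T k *\<^sub>R D k \<in> ?P" for k using XP[of "r k"] Xeq[of "r k"] by (simp add: T_def D_def)
    have fb: "f (xb + T k *\<^sub>R D k) - f xb \<le> E k * (T k)\<^sup>2" for k
    proof -
      have "f (X (r k)) < f xb + 1 / real (Suc (r k)) * (t (r k))\<^sup>2" using Xf[of "r k"] by (simp add: t_def)
      then have "f (xb + t (r k) *\<^sub>R dk (r k)) < f xb + 1 / real (Suc (r k)) * (t (r k))\<^sup>2"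
        by (simp only: Xeq[of "r k"])
      then show ?thesis by (simp add: T_def D_def E_def)
    qed
    have nd: "norm d = 1"
    proof -
      have "(\<lambda>k. norm (D k)) \<longlonglongrightarrow> norm d" by (intro tendsto_intros Dd)
      then have "(\<lambda>k. 1) \<longlonglongrightarrow> norm d" using nD by simp
      then show ?thesis by (simp add: LIMSEQ_const_iff)
    qed
    have dT: "d \<in> tangent_cone ?P xb"
      unfolding tangent_cone_def
      apply (rule CollectI, rule exI[of _ T], rule exI[of _ D]) using Tpos T0 Dd feas by auto
    have Ad_ge: "blinfun_apply ?A d \<ge> 0" using first_order dT by blast
    define Rk where "Rk k = (f (xb + T k *\<^sub>R D k) - f xb - blinfun_apply ?A (T k *\<^sub>R D k)
            - (1/2) * blinfun_apply (blinfun_apply ?B (T k *\<^sub>R D k)) (T k *\<^sub>R D k)) / (T k)\<^sup>2" for k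
    have Rk0: "Rk \<longlonglongrightarrow> 0" unfolding Rk_def by (rule Rlim[OF tay Tpos T0 nD])
    have Ad_le: "blinfun_apply ?A d \<le> 0"
    proof -
      define Q where "Q k = blinfun_apply ?A (D k) + T k * ((1/2) * blinfun_apply (blinfun_apply ?B (D k)) (D k) + Rk k)" for k
      have Qlim: "Q \<longlonglongrightarrow> blinfun_apply ?A d + 0 * ((1/2) * blinfun_apply (blinfun_apply ?B d) d + 0)"
        unfolding Q_def by (intro tendsto_intros Dd T0 Rk0)
      have Qe: "f (xb + T k *\<^sub>R D k) - f xb = T k * Q k" for k
        using Tpos[of k] unfolding Q_def Rk_def
        by (simp add: blinfun.scaleR_right blinfun.scaleR_left power2_eq_square field_simps)
      have Qle: "Q k \<le> E k * T k" for k
      proof -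
        have "T k * Q k \<le> T k * (E k * T k)" using fb[of k] Qe[of k] by (simp add: power2_eq_square mult.commute mult.left_commute)
        then show ?thesis using Tpos[of k] by simp
      qed
      have "(\<lambda>k. E k * T k) \<longlonglongrightarrow> 0 * 0" by (intro tendsto_intros E0 T0)
      then have "blinfun_apply ?A d + 0 * ((1/2) * blinfun_apply (blinfun_apply ?B d) d + 0) \<le> 0 * 0"
        using Qle by (intro LIMSEQ_le[OF Qlim]) auto
      then show ?thesis by simp
    qed
    have Ad: "blinfun_apply ?A d = 0" using Ad_ge Ad_le by simp
    have gT: "blinfun_apply (Dg xb) d \<in> tangent_cone K (g xb)"
      using tangent_image[OF g_d1 dT[unfolded feasible_def]] .
    have dC: "d \<in> critical_cone (Df xb) (Dg xb) K (g xb) - {0}"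
      unfolding critical_cone_def using gT Ad nd by auto
    note C = lC[OF dC]
    have H1: "blinfun_apply ?A u > 0" if "u \<in> asymp_second_tangent_cone ?P xb d" "inner d u = 0" "u \<noteq> 0" for u
    proof -
      have "u \<in> asymp_second_tangent_cone ?P xb d \<inter> ({w. inner d w = 0} - {0})" using that by simp
      then have "blinfun_apply (Dg xb) u \<in> blinfun_apply (Dg xb) ` (asymp_second_tangent_cone ?P xb d \<inter> ({w. inner d w = 0} - {0}))"
        by (rule imageI)
      with conjunct1[OF C] have "inner l (blinfun_apply (Dg xb) u) < 0" by (rule bspec)
      then show ?thesis using lA[of u] by simp
    qed
    have H2: "blinfun_apply (blinfun_apply ?B d) d + blinfun_apply ?A w > 0"
      if "w \<in> second_tangent_set ?P xb d" "inner d w = 0" for w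
    proof -
      define S where "S = support_fun {blinfun_apply (Dg xb) w + blinfun_apply (blinfun_apply (D2g xb) d) d | w.
                              w \<in> second_tangent_set ?P xb d \<and> inner d w = 0} l"
      define a where "a = blinfun_apply (blinfun_apply ?B d) d + inner l (blinfun_apply (blinfun_apply (D2g xb) d) d)"
      define b where "b = inner l (blinfun_apply (Dg xb) w + blinfun_apply (blinfun_apply (D2g xb) d) d)"
      have aS: "ereal a - S > 0" unfolding S_def a_def by (rule conjunct2[OF C])
      have bS: "ereal b \<le> S" unfolding S_def support_fun_def b_def
        by (rule SUP_upper) (use that in blast)
      have "a > b"
      proof (cases S)
        case (real s) then show ?thesis using aS bS by auto
      next
        case PInf then show ?thesis using aS by simp
      next
        case MInf then show ?thesis using bS by simp
      qed
      then show ?thesis using lA[of w] unfolding a_def b_def by (simp add: inner_add_right)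
    qed
    show False
      by (rule core2[OF tay Tpos T0 nD Dd feas fb E0 Ad H1 H2])
  qed
  then obtain \<kappa> \<delta> where kp: "\<kappa> > 0" and dp: "\<delta> > 0"
    and Gk: "\<And>x. x \<in> ?P \<Longrightarrow> norm (x - xb) < \<delta> \<Longrightarrow> f xb + \<kappa> * (norm (x - xb))\<^sup>2 \<le> f x" by blast
  have xbP: "xb \<in> feasible g K" using xb_S unfolding optimal_set_def by blast
  have main: "\<forall>x \<in> feasible g K \<inter> ball xb \<delta>. f x \<ge> f xb + \<kappa> * (infdist x (optimal_set f g K))\<^sup>2"
  proof
    fix x assume x: "x \<in> feasible g K \<inter> ball xb \<delta>"
    then have xn: "norm (x - xb) < \<delta>" by (simp add: dist_norm norm_minus_commute)
    have "infdist x (optimal_set f g K) \<le> dist x xb" by (rule infdist_le[OF xb_S])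
    then have "(infdist x (optimal_set f g K))\<^sup>2 \<le> (norm (x - xb))\<^sup>2"
      by (simp add: dist_norm power_mono infdist_nonneg)
    then have "\<kappa> * (infdist x (optimal_set f g K))\<^sup>2 \<le> \<kappa> * (norm (x - xb))\<^sup>2"
      using kp by simp
    moreover have "f xb + \<kappa> * (norm (x - xb))\<^sup>2 \<le> f x" using Gk[of x] x xn by auto
    ultimately show "f x \<ge> f xb + \<kappa> * (infdist x (optimal_set f g K))\<^sup>2" by linarith
  qed
  show ?thesis
    unfolding local_so_weak_sharp_min_def using xbP kp dp main by blast
qed

end
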